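(* Let $x_1,x_2,x_3>0$, $\gamma,\delta>0$ with $\gamma\ne1\ne\delta$, and let $$\mathbf{Q}=\begin{pmatrix}1&\delta x_1&x_2&x_3\\ 1/(\delta x_1)&1&x_2/x_1&x_3/x_1\\ 1/x_2&x_1/x_2&1&\gamma x_3/x_2\\ 1/x_3&x_1/x_3&x_2/(\gamma x_3)&1\end{pmatrix}$$ with principal right eigenvector $\mathbf{w}^{EM}$. If $\delta>1$ and $\gamma<1$, then $w_1^{EM}/w_3^{EM}>x_2$.
   Context: The principal right eigenvector is the positive (Perron) eigenvector belonging to the largest eigenvalue. *)

theory Defs
  imports "Jordan_Normal_Form.Char_Poly"
begin

text \<open>The 4x4 matrix Q of the theorem (indices 0..3 correspond to 1..4 of the paper).\<close>
definition Qmat :: "real \<Rightarrow> real \<Rightarrow> real \<Rightarrow> real \<Rightarrow> real \<Rightarrow> real mat" where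
  "Qmat x1 x2 x3 \<gamma> \<delta> = mat_of_rows_list 4
     [[1, \<delta> * x1, x2, x3],
      [1 / (\<delta> * x1), 1, x2 / x1, x3 / x1],
      [1 / x2, x1 / x2, 1, \<gamma> * x3 / x2],
      [1 / x3, x1 / x3, x2 / (\<gamma> * x3), 1]]"

definition principal_right_eigenvector :: "real mat \<Rightarrow> real vec \<Rightarrow> bool" where
  "principal_right_eigenvector A w \<longleftrightarrow>
     (\<exists>r. eigenvector A w r \<and> (\<forall>m. eigenvalue A m \<longrightarrow> m \<le> r)) \<and>
     (\<forall>i < dim_vec w. w $ i > 0)"

end

theory Submission
  imports Defs
begin

theorem mainTheorem12:
  fixes x1 x2 x3 \<gamma> \<delta> :: real and w :: "real vec"
  assumes "x1 > 0" "x2 > 0" "x3 > 0" "\<gamma> > 0" "\<delta> > 0" "\<gamma> \<noteq> 1" "\<delta> \<noteq> 1"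
    and "principal_right_eigenvector (Qmat x1 x2 x3 \<gamma> \<delta>) w"
    and "\<delta> > 1" "\<gamma> < 1"
  shows "w $ 0 / w $ 2 > x2"
proof -
  let ?Q = "Qmat x1 x2 x3 \<gamma> \<delta>"
  obtain r where ev: "eigenvector ?Q w r" and pos: "\<forall>i < dim_vec w. w $ i > 0"
    using assms(8) unfolding principal_right_eigenvector_def by blast
  have dr: "dim_row ?Q = 4" "dim_col ?Q = 4" by (simp_all add: Qmat_def mat_of_rows_list_def)
  have dw: "dim_vec w = 4" using ev dr unfolding eigenvector_def by auto
  have eq: "?Q *\<^sub>v w = r \<cdot>\<^sub>v w" using ev unfolding eigenvector_def by auto
  have row: "(?Q *\<^sub>v w) $ i = (\<Sum>j<4. ?Q $$ (i,j) * w $ j)" if "i < 4" for i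
    using that dr dw by (simp add: scalar_prod_def lessThan_atLeast0 mult.commute)
  have sum4: "(\<Sum>j<(4::nat). f j) = f 0 + f 1 + f 2 + (f 3::real)" for f
    by (simp add: numeral_eq_Suc)
  have comp: "r * w $ i = (\<Sum>j<4. ?Q $$ (i,j) * w $ j)" if "i < 4" for i
  proof -
    have "(?Q *\<^sub>v w) $ i = (r \<cdot>\<^sub>v w) $ i" using eq by simp
    thus ?thesis using row[OF that] that dw by simp
  qed
  have e0: "r * w $ 0 = w $ 0 + \<delta> * x1 * w $ 1 + x2 * w $ 2 + x3 * w $ 3"
    using comp[of 0] by (simp add: sum4 Qmat_def mat_of_rows_list_def)
  have e2: "r * w $ 2 = w $ 0 / x2 + x1 / x2 * w $ 1 + w $ 2 + \<gamma> * x3 / x2 * w $ 3"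
    using comp[of 2] by (simp add: sum4 Qmat_def mat_of_rows_list_def)
  have p: "w $ 0 > 0" "w $ 1 > 0" "w $ 2 > 0" "w $ 3 > 0" using pos dw by auto
  have rpos: "r > 0"
  proof -
    have "r * w $ 0 > 0" unfolding e0 using p assms by (intro add_pos_pos mult_pos_pos) auto
    thus ?thesis using p(1) by (simp add: zero_less_mult_iff)
  qed
  have key: "r * (w $ 0 - x2 * w $ 2) = (\<delta> - 1) * x1 * w $ 1 + (1 - \<gamma>) * x3 * w $ 3"
    using e0 e2 assms(2) by (simp add: field_simps)
  have "(\<delta> - 1) * x1 * w $ 1 + (1 - \<gamma>) * x3 * w $ 3 > 0"
    using p assms by (intro add_pos_pos mult_pos_pos) auto
  hence "w $ 0 - x2 * w $ 2 > 0" using key rpos by (metis zero_less_mult_iff not_less_iff_gr_or_eq)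
  thus ?thesis using p(3) by (simp add: less_divide_eq)
qed

end
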